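(* Let $\omega_N=\{x_1,\dots,x_N\}\subset\mathbb{S}^2\setminus\{(0,0,1)\}$ be pairwise distinct points, $z_i=\pi_{\mathbb{S}^2}(x_i)$, and $p_N(x)=\prod_{i=1}^N(x-z_i)$. Then $$\mathcal{E}_{\log}(\omega_N)=\sum_{i=1}^N\log\mu_{\rm norm}(p_N,z_i)+N\log\Big(\frac{\prod_{i=1}^N\sqrt{1+|z_i|^2}}{\|p_N\|}\Big)-N^2\log 2-\frac{N\log N}{2}+N\log 2.$$
   Context: $\mathbb{S}^2$ is the unit sphere in $\mathbb{R}^3$; $\pi_{\mathbb{S}^2}(a,b,c)=\frac{a+ib}{1-c}$. $\mathcal{E}_{\log}(\{x_1,\dots,x_N\})=-\sum_{i\ne j}\log\|x_i-x_j\|$. $\|\sum_{i=0}^N a_iz^i\|=(\sum_i\binom{N}{i}^{-1}|a_i|^2)^{1/2}$ is the Bombieri–Weyl norm, and for a root $z$ of degree-$N$ polynomial $P$, $\mu_{\rm norm}(P,z)=N^{1/2}\|P\|(1+|z|^2)^{N/2-1}/|P'(z)|$. *)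

theory Defs
  imports "HOL-Analysis.Analysis" "HOL-Computational_Algebra.Polynomial"
begin

definition sphere2 :: "(real^3) set" where
  "sphere2 = {x. norm x = 1}"

definition north_pole :: "real^3" where
  "north_pole = vector [0, 0, 1]"

definition stereo :: "real^3 \<Rightarrow> complex" where
  "stereo x = Complex (x$1) (x$2) / complex_of_real (1 - x$3)"

definition E_log :: "nat \<Rightarrow> (nat \<Rightarrow> real^3) \<Rightarrow> real" where
  "E_log N x = - (\<Sum>i<N. \<Sum>j<N. if i \<noteq> j then ln (dist (x i) (x j)) else 0)"

(* Bombieri-Weyl norm of a polynomial regarded as of degree N *)
definition bw_norm :: "nat \<Rightarrow> complex poly \<Rightarrow> real" where
  "bw_norm N P = sqrt (\<Sum>i\<le>N. (cmod (coeff P i))^2 / real (N choose i))"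

definition mu_norm :: "nat \<Rightarrow> complex poly \<Rightarrow> complex \<Rightarrow> real" where
  "mu_norm N P z = sqrt (real N) * bw_norm N P * (1 + (cmod z)^2) powr (real N / 2 - 1)
      / cmod (poly (pderiv P) z)"

end

theory Submission
  imports Defs
begin

lemma q_alg: "(c::real) < 1 \<Longrightarrow> (1 - c^2)/(1-c)^2 = (1+c)/(1-c)"
proof -
  assume h: "c < 1"
  have "1 - c^2 = (1-c)*(1+c)" by (simp add: algebra_simps power2_eq_square)
  moreover have "(1-c)^2 = (1-c)*(1-c)" by (simp add: power2_eq_square)
  ultimately show ?thesis using h by simp
qed

lemma uv_alg: fixes a b a' b' u v :: real assumes "u\<noteq>0" "v\<noteq>0"
  shows "u * v * ((a/u - a'/v)^2+(b/u-b'/v)^2) = (a^2+b^2)*(v/u) + (a'^2+b'^2)*(u/v) - 2*(a*a'+b*b')"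
  using assms by (simp add: power2_diff power_divide) (simp add: field_simps power2_eq_square)

lemma fin_alg: fixes m u v :: real assumes "u>0" "v>0"
  shows "u * v * m^2 = (2*m/(sqrt(2/u) * sqrt(2/v)))^2"
  using assms by (simp add: power_divide power_mult_distrib real_sqrt_pow2 field_simps)

lemma ch_alg:
  fixes a b c a' b' c' :: real
  assumes e1: "a^2+b^2+c^2=1" and e2: "a'^2+b'^2+c'^2=1" and h1: "c<1" and h2: "c'<1"
  shows "(a-a')^2+(b-b')^2+(c-c')^2 = (1-c)*(1-c')*((a/(1-c) - a'/(1-c'))^2+(b/(1-c)-b'/(1-c'))^2)"
proof -
  have u: "1-c \<noteq> 0" and v: "1-c' \<noteq> 0" using h1 h2 by auto
  have "(1-c)*(1-c')*((a/(1-c) - a'/(1-c'))^2+(b/(1-c)-b'/(1-c'))^2)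
     = (a^2+b^2)*((1-c')/(1-c)) + (a'^2+b'^2)*((1-c)/(1-c')) - 2*(a*a'+b*b')"
    using u v by (rule uv_alg)
  also have "\<dots> = ((1-c)*(1+c))*((1-c')/(1-c)) + ((1-c')*(1+c'))*((1-c)/(1-c')) - 2*(a*a'+b*b')"
  proof -
    have "a^2+b^2 = (1-c)*(1+c)" "a'^2+b'^2 = (1-c')*(1+c')"
      using e1 e2 by (simp_all add: algebra_simps power2_eq_square)
    then show ?thesis by simp
  qed
  also have "\<dots> = (1+c)*(1-c') + (1+c')*(1-c) - 2*(a*a'+b*b')" using u v by simp
  finally show ?thesis using e1 e2 by (simp add: algebra_simps power2_eq_square)
qed

lemma sph_facts:
  assumes "x \<in> sphere2 - {north_pole}"
  shows "(x$1)^2 + (x$2)^2 + (x$3)^2 = 1" and "x$3 < 1"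
proof -
  have n: "norm x = 1" using assms by (simp add: sphere2_def)
  have "(norm x)^2 = x \<bullet> x" by (simp add: power2_norm_eq_inner)
  then show e: "(x$1)^2 + (x$2)^2 + (x$3)^2 = 1" using n
    by (simp add: inner_vec_def sum_3 power2_eq_square)
  have "x \<noteq> north_pole" using assms by simp
  hence "x$1 \<noteq> 0 \<or> x$2 \<noteq> 0 \<or> x$3 \<noteq> 1"
    by (auto simp: north_pole_def vec_eq_iff forall_3)
  then show "x$3 < 1"
  proof (rule contrapos_pp)
    assume "\<not> x$3 < 1"
    hence c: "x$3 \<ge> 1" by simp
    have "(x$3)^2 \<ge> 1" using c by (simp add: one_le_power)
    moreover have "(x$1)^2 \<ge> 0" "(x$2)^2 \<ge> 0" by simp_all
    ultimately have "(x$1)^2 = 0" "(x$2)^2 = 0" "(x$3)^2 = 1" using e by linarith+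
    then have "x$1 = 0" "x$2 = 0" "x$3 = 1" using c by (auto simp: power2_eq_1_iff)
    then show "\<not> (x$1 \<noteq> 0 \<or> x$2 \<noteq> 0 \<or> x$3 \<noteq> 1)" by simp
  qed
qed

lemma stereo_eq: "x$3 < 1 \<Longrightarrow> stereo x = Complex (x$1/(1-x$3)) (x$2/(1-x$3))"
  by (simp add: stereo_def complex_eq_iff Re_divide Im_divide power2_eq_square)

lemma q_eq:
  assumes "x \<in> sphere2 - {north_pole}"
  shows "1 + (cmod (stereo x))^2 = 2/(1-x$3)"
proof -
  note f = sph_facts[OF assms]
  have "(cmod (stereo x))^2 = (x$1/(1-x$3))^2 + (x$2/(1-x$3))^2"
    using f(2) by (simp add: stereo_eq cmod_power2)
  also have "\<dots> = (1 - (x$3)^2)/(1-x$3)^2" using f(1) f(2)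
    by (simp add: power_divide add_divide_distrib[symmetric])
  also have "\<dots> = (1 + x$3)/(1-x$3)" using f(2) by (rule q_alg)
  finally show ?thesis using f(2) by (simp add: field_simps)
qed

lemma chordal:
  assumes "x \<in> sphere2 - {north_pole}" "y \<in> sphere2 - {north_pole}"
  shows "dist x y = 2 * cmod (stereo x - stereo y) /
     (sqrt (1 + (cmod (stereo x))^2) * sqrt (1 + (cmod (stereo y))^2))"
proof -
  note f = sph_facts[OF assms(1)] and g = sph_facts[OF assms(2)]
  define u where "u = 1 - x$3"
  define v where "v = 1 - y$3"
  have u: "u > 0" and v: "v > 0" using f g by (auto simp: u_def v_def)
  have "(dist x y)^2 = (x$1-y$1)^2 + (x$2-y$2)^2 + (x$3-y$3)^2"
    unfolding dist_norm power2_norm_eq_inner by (simp add: inner_vec_def sum_3 power2_eq_square)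
  also have "\<dots> = u * v * ((x$1/u - y$1/v)^2 + (x$2/u - y$2/v)^2)"
    unfolding u_def v_def by (rule ch_alg[OF f(1) g(1) f(2) g(2)])
  also have "\<dots> = (2 * cmod (stereo x - stereo y) /
     (sqrt (1 + (cmod (stereo x))^2) * sqrt (1 + (cmod (stereo y))^2)))^2"
  proof -
    have "(cmod (stereo x - stereo y))^2 = (x$1/u - y$1/v)^2 + (x$2/u - y$2/v)^2"
      using f(2) g(2) by (simp add: stereo_eq cmod_power2 u_def v_def)
    moreover have "1 + (cmod (stereo x))^2 = 2/u" using q_eq[OF assms(1)] by (simp add: u_def)
    moreover have "1 + (cmod (stereo y))^2 = 2/v" using q_eq[OF assms(2)] by (simp add: v_def)
    ultimately show ?thesis using fin_alg[OF u v, of "cmod (stereo x - stereo y)"] by simp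
  qed
  finally have sq: "(dist x y)^2 = (2 * cmod (stereo x - stereo y) /
     (sqrt (1 + (cmod (stereo x))^2) * sqrt (1 + (cmod (stereo y))^2)))^2" .
  have nn: "0 \<le> 2 * cmod (stereo x - stereo y) /
     (sqrt (1 + (cmod (stereo x))^2) * sqrt (1 + (cmod (stereo y))^2))"
    by (intro divide_nonneg_nonneg mult_nonneg_nonneg) simp_all
  show ?thesis by (rule power2_eq_imp_eq[OF sq zero_le_dist nn])
qed

lemma pderiv_root:
  fixes w :: "nat \<Rightarrow> complex"
  assumes "i < N"
  shows "poly (pderiv (\<Prod>j<N. [:- w j, 1:])) (w i) = (\<Prod>j\<in>{..<N}-{i}. w i - w j)"
proof -
  have "poly (pderiv (\<Prod>j<N. [:- w j, 1:])) (w i) = (\<Sum>a<N. \<Prod>j\<in>{..<N}-{a}. w i - w j)"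
  proof -
    have pd1: "pderiv [:- w j, 1:] = 1" for j by (simp add: pderiv_pCons)
    have "pderiv (\<Prod>j<N. [:- w j, 1:]) = (\<Sum>a<N. \<Prod>j\<in>{..<N}-{a}. [:- w j, 1:])"
      by (simp only: pderiv_prod pd1 mult_1_right)
    then show ?thesis by (simp only: poly_sum poly_prod) simp
  qed
  also have "\<dots> = (\<Prod>j\<in>{..<N}-{i}. w i - w j) + (\<Sum>a\<in>{..<N}-{i}. \<Prod>j\<in>{..<N}-{a}. w i - w j)"
    using assms by (simp add: sum.remove)
  also have "(\<Sum>a\<in>{..<N}-{i}. \<Prod>j\<in>{..<N}-{a}. w i - w j) = 0"
    by (intro sum.neutral ballI prod_zero) (use assms in auto)
  finally show ?thesis by simp
qed

lemma bw_ge1: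
  fixes w :: "nat \<Rightarrow> complex"
  shows "bw_norm N (\<Prod>j<N. [:- w j, 1:]) \<ge> 1"
proof -
  let ?p = "(\<Prod>j<N. [:- w j, 1:])"
  have d: "degree ?p = N"
    by (subst degree_prod_sum_eq) auto
  have l: "lead_coeff ?p = 1" by (simp add: lead_coeff_prod)
  have c: "coeff ?p N = 1" using d l by simp
  have "(cmod (coeff ?p N))^2 / real (N choose N) \<le> (\<Sum>i\<le>N. (cmod (coeff ?p i))^2 / real (N choose i))"
    by (rule member_le_sum) auto
  then have "1 \<le> (\<Sum>i\<le>N. (cmod (coeff ?p i))^2 / real (N choose i))" using c by simp
  then show ?thesis unfolding bw_norm_def by simp
qed

lemma sum4: "finite I \<Longrightarrow> (\<Sum>i\<in>I. a + f i - b * g i / 2 - (c - g i) / 2) = real (card I) * a + sum f I - b * sum g I / 2 - (real (card I) * c - sum g I) / 2"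
  for f g :: "'a \<Rightarrow> real"
  by (simp add: sum.distrib sum_subtractf sum_distrib_left sum_divide_distrib diff_divide_distrib)

lemma sum5: "(\<Sum>i\<in>I. a + b + d * g i - f i) = real (card I) * (a + b) + d * sum g I - sum f I"
  for f g :: "'a \<Rightarrow> real"
  by (simp add: sum.distrib sum_subtractf sum_distrib_left algebra_simps)

lemma fin_arith: fixes n l2 SP A lB lN :: real
  shows "- (n * ((n - 1) * l2) + SP - (n - 1) * A / 2 - (n * A - A) / 2)
   = (n * (lN/2 + lB) + (n/2 - 1) * A - SP) + n * (A/2 - lB) - n^2 * l2 - n * lN / 2 + n * l2"
  by (simp add: field_simps power2_eq_square)

theorem lemma4p1:
  fixes N :: nat and x :: "nat \<Rightarrow> real^3"
  assumes "\<And>i. i < N \<Longrightarrow> x i \<in> sphere2 - {north_pole}"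
    and "inj_on x {..<N}"
  defines "z \<equiv> (\<lambda>i. stereo (x i))"
    and "p \<equiv> (\<Prod>i<N. [:- stereo (x i), 1:])"
  shows "E_log N x =
     (\<Sum>i<N. ln (mu_norm N p (z i)))
     + real N * ln ((\<Prod>i<N. sqrt (1 + (cmod (z i))^2)) / bw_norm N p)
     - (real N)^2 * ln 2 - real N * ln (real N) / 2 + real N * ln 2"
proof -
  define q where "q i = 1 + (cmod (z i))^2" for i
  have qpos: "q i > 0" for i unfolding q_def by (simp add: add_pos_nonneg)
  have p_alt: "p = (\<Prod>j<N. [:- z j, 1:])" by (simp add: p_def z_def)
  define B where "B = bw_norm N p"
  have Bpos: "B > 0" using bw_ge1[of N z] unfolding B_def p_alt by simp
  have dist_eq: "dist (x i) (x j) = 2 * cmod (z i - z j) / (sqrt (q i) * sqrt (q j))"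
    if "i < N" "j < N" for i j
    using chordal[OF assms(1)[OF that(1)] assms(1)[OF that(2)]] by (simp add: z_def q_def)
  have zne: "z i \<noteq> z j" if "i < N" "j < N" "i \<noteq> j" for i j
  proof
    assume "z i = z j"
    then have "dist (x i) (x j) = 0" using dist_eq[OF that(1,2)] by simp
    then have "x i = x j" by simp
    then show False using assms(2) that by (auto dest: inj_onD)
  qed
  have lnd: "ln (dist (x i) (x j)) = ln 2 + ln (cmod (z i - z j)) - ln (q i)/2 - ln (q j)/2"
    if "i < N" "j < N" "i \<noteq> j" for i j
  proof -
    have "cmod (z i - z j) > 0" using zne[OF that] by simp
    then show ?thesis using qpos[of i] qpos[of j]
      by (simp add: dist_eq[OF that(1,2)] ln_div ln_mult ln_sqrt less_imp_le)
  qed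
  define P where "P i = ln (cmod (poly (pderiv p) (z i)))" for i
  have Peq: "P i = (\<Sum>j\<in>{..<N}-{i}. ln (cmod (z i - z j)))" if "i < N" for i
  proof -
    have "P i = ln (\<Prod>j\<in>{..<N}-{i}. cmod (z i - z j))"
      unfolding P_def p_alt pderiv_root[OF that] by (simp add: prod_norm)
    also have "\<dots> = (\<Sum>j\<in>{..<N}-{i}. ln (cmod (z i - z j)))"
      by (rule ln_prod) (use zne that in auto)
    finally show ?thesis .
  qed
  have p'ne: "cmod (poly (pderiv p) (z i)) > 0" if "i < N" for i
    unfolding p_alt pderiv_root[OF that] using zne that by (auto simp: prod_norm)
  define A where "A = (\<Sum>i<N. ln (q i))"
  have inner: "(\<Sum>j<N. if i \<noteq> j then ln (dist (x i) (x j)) else 0)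
      = (real N - 1) * ln 2 + P i - (real N - 1) * ln (q i) / 2 - (A - ln (q i)) / 2"
    if "i < N" for i
  proof -
    let ?S = "{..<N}-{i}"
    have "(\<Sum>j<N. if i \<noteq> j then ln (dist (x i) (x j)) else 0)
        = (\<Sum>j\<in>?S. if i \<noteq> j then ln (dist (x i) (x j)) else 0)"
      using that by (simp add: sum.remove)
    also have "\<dots> = (\<Sum>j\<in>?S. ln 2 + ln (cmod (z i - z j)) - ln (q i)/2 - ln (q j)/2)"
      by (rule sum.cong) (use lnd that in auto)
    also have "\<dots> = real (card ?S) * ln 2 + (\<Sum>j\<in>?S. ln (cmod (z i - z j)))
         - real (card ?S) * ln (q i) / 2 - (\<Sum>j\<in>?S. ln (q j)) / 2"
      by (simp add: sum.distrib sum_subtractf sum_divide_distrib)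
    also have "real (card ?S) = real N - 1" using that by simp
    also have "(\<Sum>j\<in>?S. ln (q j)) = A - ln (q i)" using that by (simp add: A_def sum_diff1)
    finally show ?thesis using Peq[OF that] by simp
  qed
  have mu: "ln (mu_norm N p (z i)) = ln (real N)/2 + ln B + (real N/2 - 1) * ln (q i) - P i"
    if "i < N" for i
    using that Bpos qpos[of i] p'ne[OF that]
    by (simp add: mu_norm_def B_def[symmetric] q_def[symmetric] P_def ln_div ln_mult ln_sqrt)
  have last: "ln ((\<Prod>i<N. sqrt (q i)) / B) = A/2 - ln B"
  proof -
    have qn: "sqrt (q i) \<noteq> 0" for i using qpos[of i] by simp
    have qn': "q i \<noteq> 0" for i using qpos[of i] by simp
    have "ln (\<Prod>i<N. sqrt (q i)) = (\<Sum>i<N. ln (sqrt (q i)))"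
      by (rule ln_prod) (simp_all add: qn qn')
    also have "\<dots> = A/2" by (simp add: A_def ln_sqrt less_imp_le qpos sum_divide_distrib)
    moreover have "(\<Prod>i<N. sqrt (q i)) > 0" by (rule prod_pos) (simp add: qpos)
    ultimately show ?thesis using Bpos by (simp add: ln_divide_pos)
  qed
  have L: "E_log N x = - (\<Sum>i<N. (real N - 1) * ln 2 + P i - (real N - 1) * ln (q i) / 2 - (A - ln (q i)) / 2)"
    unfolding E_log_def using inner by simp
  have R1: "(\<Sum>i<N. ln (mu_norm N p (z i))) = (\<Sum>i<N. ln (real N)/2 + ln B + (real N/2 - 1) * ln (q i) - P i)"
    using mu by simp
  have R2: "(\<Prod>i<N. sqrt (1 + (cmod (z i))^2)) = (\<Prod>i<N. sqrt (q i))" by (simp add: q_def)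
  have S1: "(\<Sum>i<N. (real N - 1) * ln 2 + P i - (real N - 1) * ln (q i) / 2 - (A - ln (q i)) / 2)
      = real N * ((real N - 1) * ln 2) + sum P {..<N} - (real N - 1) * A / 2 - (real N * A - A) / 2"
    using sum4[of "{..<N}" "(real N - 1) * ln 2" P "real N - 1" "\<lambda>i. ln (q i)" A] by (simp add: A_def)
  have S2: "(\<Sum>i<N. ln (real N)/2 + ln B + (real N/2 - 1) * ln (q i) - P i)
      = real N * (ln (real N)/2 + ln B) + (real N/2 - 1) * A - sum P {..<N}"
    using sum5[of "ln (real N)/2" "ln B" "real N/2 - 1" "\<lambda>i. ln (q i)" P "{..<N}"] by (simp add: A_def)
  show ?thesis
    unfolding L R1 R2 B_def[symmetric] last S1 S2 by (rule fin_arith)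
qed

end
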